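(* Let $\mathcal A,\mathcal B>0$, $\alpha,\beta\in(0,1)$, $h,\tau>0$. If $$\frac{\tau^{\alpha}(-\alpha^2+4\alpha-2)\mathcal A+\tau^{\beta}(-\beta^2+4\beta-2)\mathcal B}{h^2}\le\frac{279}{952},$$ then for every real $\theta$, with $s=\sin^2(\theta h/2)$, $$\widetilde{\mathcal P}=\Big[1-\tfrac{4}{35}s^3\Big]-4g_1^{(\alpha,\beta)}s\Big[1+\tfrac13 s+\tfrac{8}{45}s^2\Big]\ge0.$$
   Context: $\varpi_\ell^{(\sigma)}=(-1)^\ell\binom{\sigma}{\ell}$, $g_0^{(\sigma)}=\frac{1+\sigma}{2}\varpi_0^{(\sigma)}$, $g_\ell^{(\sigma)}=\frac{1+\sigma}{2}\varpi_\ell^{(\sigma)}+\frac{1-\sigma}{2}\varpi_{\ell-1}^{(\sigma)}$ ($\ell\ge1$); $\mu_\alpha=\tau^\alpha\mathcal A/h^2$, $\mu_\beta=\tau^\beta\mathcal B/h^2$, $g_\ell^{(\alpha,\beta)}=\mu_\alpha g_\ell^{(1-\alpha)}+\mu_\beta g_\ell^{(1-\beta)}$. *)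

theory Defs
  imports Complex_Main
begin

definition varpi :: "real \<Rightarrow> nat \<Rightarrow> real" where
  "varpi \<sigma> l = (-1) ^ l * (\<sigma> gchoose l)"

definition gcoef :: "real \<Rightarrow> nat \<Rightarrow> real" where
  "gcoef \<sigma> l = (if l = 0 then (1 + \<sigma>) / 2 * varpi \<sigma> 0
     else (1 + \<sigma>) / 2 * varpi \<sigma> l + (1 - \<sigma>) / 2 * varpi \<sigma> (l - 1))"

definition gab :: "real \<Rightarrow> real \<Rightarrow> real \<Rightarrow> real \<Rightarrow> real \<Rightarrow> real \<Rightarrow> nat \<Rightarrow> real" where
  "gab a b \<alpha> \<beta> \<tau> h l =
     (\<tau> powr \<alpha> * a / h^2) * gcoef (1 - \<alpha>) l + (\<tau> powr \<beta> * b / h^2) * gcoef (1 - \<beta>) l"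

end

theory Submission
  imports Defs
begin

lemma g1: "gcoef (1 - a) 1 = (- (a^2) + 4*a - 2) / 2"
  by (simp add: gcoef_def varpi_def power2_eq_square field_simps)

theorem lemma9:
  fixes A B \<alpha> \<beta> h \<tau> :: real
  assumes "A > 0" "B > 0" "0 < \<alpha>" "\<alpha> < 1" "0 < \<beta>" "\<beta> < 1" "h > 0" "\<tau> > 0"
    and "(\<tau> powr \<alpha> * (- (\<alpha>^2) + 4*\<alpha> - 2) * A + \<tau> powr \<beta> * (- (\<beta>^2) + 4*\<beta> - 2) * B) / h^2
           \<le> 279 / 952"
  shows "\<forall>\<theta>::real. let s = (sin (\<theta> * h / 2))^2 in
           (1 - 4/35 * s^3) - 4 * gab A B \<alpha> \<beta> \<tau> h 1 * s * (1 + s/3 + 8/45 * s^2) \<ge> 0"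
proof (intro allI, unfold Let_def)
  fix \<theta> :: real
  define s where "s = (sin (\<theta> * h / 2))^2"
  define G where "G = gab A B \<alpha> \<beta> \<tau> h 1"
  have G: "G = (\<tau> powr \<alpha> * (- (\<alpha>^2) + 4*\<alpha> - 2) * A + \<tau> powr \<beta> * (- (\<beta>^2) + 4*\<beta> - 2) * B) / h^2 / 2"
    unfolding G_def gab_def g1 by (simp add: diff_divide_distrib add_divide_distrib algebra_simps)
  have G4: "4 * G \<le> 279/476"
  proof -
    define X where "X = (\<tau> powr \<alpha> * (- (\<alpha>^2) + 4*\<alpha> - 2) * A + \<tau> powr \<beta> * (- (\<beta>^2) + 4*\<beta> - 2) * B) / h^2"
    have "G = X / 2" using G X_def by simp
    moreover have "X \<le> 279/952" using assms(9) X_def by simp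
    ultimately show ?thesis by simp
  qed
  have s0: "0 \<le> s" unfolding s_def by simp
  have s1: "s \<le> 1" unfolding s_def
    using power_mono[OF abs_sin_le_one abs_ge_zero, of "\<theta> * h / 2" 2] by simp
  have s3: "s^3 \<le> 1" using s0 s1 by (simp add: power_le_one)
  define q where "q = s * (1 + s/3 + 8/45 * s^2)"
  have q0: "0 \<le> q" unfolding q_def using s0 by simp
  have q1: "q \<le> 68/45" unfolding q_def
  proof -
    have "s^2 \<le> 1" using s0 s1 by (simp add: power_le_one)
    hence "1 + s/3 + 8/45 * s^2 \<le> 68/45" using s1 by simp
    thus "s * (1 + s/3 + 8/45 * s^2) \<le> 68/45"
      using s0 s1 mult_mono[of s 1 "1 + s/3 + 8/45 * s^2" "68/45"] by simp
  qed
  have "4 * G * q \<le> 279/476 * 68/45"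
  proof (cases "G \<le> 0")
    case True then show ?thesis using q0 mult_nonpos_nonneg[of "4*G" q] by simp
  next
    case False
    have "4*G*q \<le> 279/476 * q" using mult_right_mono[OF G4 q0] by simp
    also have "\<dots> \<le> 279/476 * 68/45" using q1 by simp
    finally show ?thesis .
  qed
  hence "(1 - 4/35 * s^3) - 4 * G * q \<ge> 0" using s3 by simp
  thus "(1 - 4/35 * (sin (\<theta> * h / 2))\<^sup>2^3) - 4 * gab A B \<alpha> \<beta> \<tau> h 1 * (sin (\<theta> * h / 2))\<^sup>2 * (1 + (sin (\<theta> * h / 2))\<^sup>2/3 + 8/45 * ((sin (\<theta> * h / 2))\<^sup>2)^2) \<ge> 0"
    unfolding s_def[symmetric] G_def[symmetric] q_def by (simp add: mult.assoc)
qed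

end
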